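(* Let $k$ be a Brauer field and let $K/k$ be a field extension such that the group $K^{\times}/(k^{\times}\cdot(K^{\times})^d)$ is finite for all $d\ge 1$. Then $K$ is a Brauer field.
   Context: A field $k$ is a Brauer field if for every $d\ge 1$ there is a number $N_k(d)$ such that every equation $a_1x_1^d+\cdots+a_nx_n^d=0$ with $n>N_k(d)$ and $a_i\in k$ has a non-trivial solution in $k^n$. *)

theory Defs
  imports Main
begin

definition is_subfield :: "'a::field set \<Rightarrow> bool" where
  "is_subfield k \<longleftrightarrow> 0 \<in> k \<and> 1 \<in> k \<and>
     (\<forall>x\<in>k. \<forall>y\<in>k. x + y \<in> k \<and> x * y \<in> k) \<and>
     (\<forall>x\<in>k. - x \<in> k) \<and> (\<forall>x\<in>k. x \<noteq> 0 \<longrightarrow> inverse x \<in> k)"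

definition brauer_field :: "'a::field set \<Rightarrow> bool" where
  "brauer_field k \<longleftrightarrow> (\<forall>d::nat. d \<ge> 1 \<longrightarrow> (\<exists>N::nat. \<forall>n > N. \<forall>a :: nat \<Rightarrow> 'a.
      (\<forall>i<n. a i \<in> k) \<longrightarrow>
      (\<exists>x :: nat \<Rightarrow> 'a. (\<forall>i<n. x i \<in> k) \<and> (\<exists>i<n. x i \<noteq> 0) \<and>
                         (\<Sum>i<n. a i * x i ^ d) = 0)))"

text \<open>The subgroup k^* . (K^* )^d of K^*, for k a subfield of K = UNIV.\<close>
definition norm_subgroup :: "'a::field set \<Rightarrow> nat \<Rightarrow> 'a set" where
  "norm_subgroup k d = {a * y ^ d | a y. a \<in> k \<and> a \<noteq> 0 \<and> y \<noteq> 0}"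

definition quotient_cosets :: "'a::field set \<Rightarrow> nat \<Rightarrow> 'a set set" where
  "quotient_cosets k d = (\<lambda>x. (\<lambda>h. x * h) ` norm_subgroup k d) ` (UNIV - {0})"

end

theory Submission
  imports Defs
begin

lemma pigeon_fiber:
  fixes f :: "nat \<Rightarrow> 'b"
  assumes "finite A" "card A > m * N" "card (f ` A) \<le> m"
  shows "\<exists>b\<in>f ` A. card {i\<in>A. f i = b} > N"
proof (rule ccontr)
  assume "\<not> ?thesis"
  hence le: "\<And>b. b \<in> f ` A \<Longrightarrow> card {i\<in>A. f i = b} \<le> N" by force
  have "A = (\<Union>b\<in>f ` A. {i\<in>A. f i = b})" by auto
  hence "card A \<le> (\<Sum>b\<in>f ` A. card {i\<in>A. f i = b})"
    by (metis assms(1) card_UN_le finite_imageI)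
  also have "\<dots> \<le> card (f ` A) * N" using sum_bounded_above[of "f ` A" "\<lambda>b. card {i\<in>A. f i = b}" N] le
    by auto
  also have "\<dots> \<le> m * N" using assms(3) by simp
  finally show False using assms(2) by simp
qed

theorem proposition2p4:
  fixes k :: "'a::field set"
  assumes "is_subfield k"
    and "brauer_field k"
    and "\<And>d::nat. d \<ge> 1 \<Longrightarrow> finite (quotient_cosets k d)"
  shows "brauer_field (UNIV :: 'a set)"
  unfolding brauer_field_def
proof (intro allI impI)
  fix d :: nat assume d: "d \<ge> 1"
  have k1: "1 \<in> k" and kmul: "\<And>x y. x \<in> k \<Longrightarrow> y \<in> k \<Longrightarrow> x * y \<in> k"
    using assms(1) unfolding is_subfield_def by auto
  have "\<exists>N::nat. \<forall>n > N. \<forall>a :: nat \<Rightarrow> 'a. (\<forall>i<n. a i \<in> k) \<longrightarrow>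
      (\<exists>x :: nat \<Rightarrow> 'a. (\<forall>i<n. x i \<in> k) \<and> (\<exists>i<n. x i \<noteq> 0) \<and>
                         (\<Sum>i<n. a i * x i ^ d) = 0)"
    using assms(2) d unfolding brauer_field_def by blast
  then obtain N where N: "\<forall>n > N. \<forall>a :: nat \<Rightarrow> 'a. (\<forall>i<n. a i \<in> k) \<longrightarrow>
      (\<exists>x :: nat \<Rightarrow> 'a. (\<forall>i<n. x i \<in> k) \<and> (\<exists>i<n. x i \<noteq> 0) \<and>
                         (\<Sum>i<n. a i * x i ^ d) = 0)" by blast
  define H where "H = norm_subgroup k d"
  define m where "m = card (quotient_cosets k d)"
  have finQ: "finite (quotient_cosets k d)" using assms(3) d by simp
  have oneH: "1 \<in> H" unfolding H_def norm_subgroup_def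
    by (intro CollectI exI[of _ 1]) (simp add: k1)
  show "\<exists>N. \<forall>n>N. \<forall>a :: nat \<Rightarrow> 'a. (\<forall>i<n. a i \<in> UNIV) \<longrightarrow>
      (\<exists>x. (\<forall>i<n. x i \<in> UNIV) \<and> (\<exists>i<n. x i \<noteq> 0) \<and> (\<Sum>i<n. a i * x i ^ d) = 0)"
  proof (rule exI[of _ "m * N"], intro allI impI)
    fix n :: nat and a :: "nat \<Rightarrow> 'a"
    assume n: "n > m * N" and "\<forall>i<n. a i \<in> UNIV"
    show "\<exists>x. (\<forall>i<n. x i \<in> UNIV) \<and> (\<exists>i<n. x i \<noteq> 0) \<and> (\<Sum>i<n. a i * x i ^ d) = 0"
    proof (cases "\<exists>i<n. a i = 0")
      case True
      then obtain i where i: "i < n" "a i = 0" by blast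
      let ?x = "\<lambda>j. if j = i then (1::'a) else 0"
      have "(\<Sum>j<n. a j * ?x j ^ d) = 0"
        by (rule sum.neutral) (use i d in auto)
      thus ?thesis using i by (intro exI[of _ ?x]) auto
    next
      case False
      define f where "f = (\<lambda>i. (\<lambda>h. a i * h) ` H)"
      have "f ` {..<n} \<subseteq> quotient_cosets k d"
        using False unfolding f_def quotient_cosets_def H_def by auto
      hence "card (f ` {..<n}) \<le> m" unfolding m_def using finQ card_mono by blast
      then obtain b where b: "b \<in> f ` {..<n}" and bN: "card {i\<in>{..<n}. f i = b} > N"
        using pigeon_fiber[of "{..<n}" m N f] n by auto
      define S where "S = {i\<in>{..<n}. f i = b}"
      obtain i0 where i0: "i0 < n" "f i0 = b" using b by auto
      have finS: "finite S" unfolding S_def by auto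
      have Ssub: "S \<subseteq> {..<n}" unfolding S_def by auto
      have rep: "\<exists>c y. c \<in> k \<and> c \<noteq> 0 \<and> y \<noteq> 0 \<and> a i = a i0 * (c * y ^ d)" if "i \<in> S" for i
      proof -
        have "a i \<in> f i" unfolding f_def using oneH by force
        also have "f i = f i0" using that i0 unfolding S_def by auto
        finally obtain h where "h \<in> H" "a i = a i0 * h" unfolding f_def by auto
        thus ?thesis unfolding H_def norm_subgroup_def by auto
      qed
      have ex: "\<forall>i\<in>S. \<exists>p. fst p \<in> k \<and> fst p \<noteq> 0 \<and> snd p \<noteq> 0 \<and> a i = a i0 * (fst p * snd p ^ d)"
      proof
        fix i assume "i \<in> S"
        then obtain c y where "c \<in> k \<and> c \<noteq> 0 \<and> y \<noteq> 0 \<and> a i = a i0 * (c * y ^ d)" using rep by blast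
        thus "\<exists>p. fst p \<in> k \<and> fst p \<noteq> 0 \<and> snd p \<noteq> 0 \<and> a i = a i0 * (fst p * snd p ^ d)"
          by (intro exI[of _ "(c, y)"]) simp
      qed
      obtain p where p: "\<forall>i\<in>S. fst (p i) \<in> k \<and> fst (p i) \<noteq> 0 \<and> snd (p i) \<noteq> 0 \<and> a i = a i0 * (fst (p i) * snd (p i) ^ d)"
        using bchoice[OF ex] by (elim exE)
      define c where "c = (\<lambda>i. fst (p i))"
      define y where "y = (\<lambda>i. snd (p i))"
      have cy: "\<And>i. i \<in> S \<Longrightarrow> c i \<in> k \<and> c i \<noteq> 0 \<and> y i \<noteq> 0 \<and> a i = a i0 * (c i * y i ^ d)"
        using p unfolding c_def y_def by auto
      obtain g where g: "bij_betw g {0..<card S} S" using ex_bij_betw_nat_finite[OF finS] by blast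
      have gS: "\<And>t. t < card S \<Longrightarrow> g t \<in> S" using g by (auto dest: bij_betwE)
      have ck: "\<And>t. t < card S \<Longrightarrow> c (g t) \<in> k" using gS cy by blast
      have ck2: "\<forall>t<card S. c (g t) \<in> k" using ck by blast
      have cS: "card S > N" using bN unfolding S_def .
      obtain z where z: "\<forall>t<card S. z t \<in> k" "\<exists>t<card S. z t \<noteq> 0"
          "(\<Sum>t<card S. c (g t) * z t ^ d) = 0"
        using mp[OF spec[OF mp[OF spec[OF N, of "card S"] cS], of "\<lambda>t. c (g t)"] ck2] by (elim exE conjE) blast
      define gi where "gi = inv_into {0..<card S} g"
      have gi: "\<And>t. t < card S \<Longrightarrow> gi (g t) = t"
        using g unfolding gi_def bij_betw_def by (simp add: inv_into_f_f)
      define x where "x = (\<lambda>i. if i \<in> S then z (gi i) / y i else 0)"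
      have "(\<Sum>i<n. a i * x i ^ d) = (\<Sum>i\<in>S. a i * x i ^ d)"
        using Ssub d by (intro sum.mono_neutral_right) (auto simp: x_def)
      also have "\<dots> = (\<Sum>t\<in>{0..<card S}. a (g t) * x (g t) ^ d)"
        using sum.reindex_bij_betw[OF g, of "\<lambda>i. a i * x i ^ d"] by simp
      also have "\<dots> = (\<Sum>t\<in>{0..<card S}. a i0 * (c (g t) * z t ^ d))"
      proof (rule sum.cong[OF refl])
        fix t assume t: "t \<in> {0..<card S}"
        hence gt: "g t \<in> S" using g unfolding bij_betw_def by auto
        have xe: "x (g t) = z t / y (g t)" using gt gi t by (simp add: x_def)
        have yne: "y (g t) \<noteq> 0" and ae: "a (g t) = a i0 * (c (g t) * y (g t) ^ d)"
          using cy[OF gt] by auto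
        show "a (g t) * x (g t) ^ d = a i0 * (c (g t) * z t ^ d)"
          unfolding xe ae power_divide using yne by (simp add: field_simps)
      qed
      also have "\<dots> = a i0 * (\<Sum>t<card S. c (g t) * z t ^ d)"
        by (simp add: sum_distrib_left atLeast0LessThan)
      also have "\<dots> = 0" using z(3) by simp
      finally have sum0: "(\<Sum>i<n. a i * x i ^ d) = 0" .
      obtain t where t: "t < card S" "z t \<noteq> 0" using z(2) by blast
      hence gt: "g t \<in> S" using g unfolding bij_betw_def by auto
      have "x (g t) \<noteq> 0" using gt gi t cy[OF gt] by (simp add: x_def)
      moreover have "g t < n" using gt Ssub by auto
      ultimately show ?thesis using sum0 by (intro exI[of _ x]) auto
    qed
  qed
qed

end
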